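(* For any BT partition sort algorithm $\mathcal{A}$ that sorts the permutation $\pi$ using $\mathcal{A}(\pi)$ accesses, there is a BST mergesort algorithm $\mathcal{B}$ that sorts the permutation $\pi^{-1}$ using $\mathcal{B}(\pi^{-1})=\mathcal{A}(\pi)$ accesses; and conversely, for any BST mergesort algorithm $\mathcal{B}$ sorting $\pi^{-1}$ using $\mathcal{B}(\pi^{-1})$ accesses there is a BT partition sort algorithm $\mathcal{A}$ sorting $\pi$ with $\mathcal{A}(\pi)=\mathcal{B}(\pi^{-1})$ accesses.
   Context: A top tree of a binary tree $T$ is a connected set of nodes containing the root. BST merge: given BSTs $T_A,T_B$ with disjoint keys, for some top trees $\tau_a$ of $T_A$, $\tau_b$ of $T_B$, it returns a BST $T$ on the union of keys such that for some top tree $\tau$ of $T$, $\tau=\tau_a\cup\tau_b$, the subtrees hanging off $\tau$ are unchanged subtrees of $T_A$ or $T_B$, and $\tau$ contains the block boundaries (in the sorted merged order, blocks are maximal contiguous runs of keys from the same input; boundaries are their first and last keys). Number of accesses: $|\tau|$. BST mergesort: on input of size 1 returns it; otherwise splits the input sequence into two contiguous nonempty parts, recursively sorts each by BST mergesort, BST-merges the results; accesses are summed over all merges. BT partition: given a binary tree (BT) $T$ (its left-to-right order of keys represents input order), for some top tree $\tau$ of $T$ returns two nonempty BTs $T_A,T_B$ with distinct keys such that for some top trees $\tau_a,\tau_b$ of them $\tau=\tau_a\cup\tau_b$, the other subtrees of $T$ appear unchanged in $T_A$ or $T_B$, $\tau$ contains the block boundaries (blocks: maximal contiguous runs in the left-to-right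 order of $T$ sent to the same output), and the left-to-right orders of $T_A$, $T_B$ are subsequences of that of $T$. Number of accesses: $|\tau|$. BT partition sort: on a BT of size one stops; otherwise BT-partitions $T$ into $T_a,T_b$ with, for some key $k$, keys of $T_a$ all $<k$ and keys of $T_b$ all $\ge k$, recurses, and appends; it sorts $\pi$ when started on a BT with left-to-right order $\pi$; accesses are summed over all partitions. *)

theory Defs
  imports Main "HOL-Library.Tree" "HOL-Library.Sublist"
begin

(* Nodes of trees with distinct keys are identified with their keys.
   A top tree of T: a connected set of nodes containing the root. *)
fun is_top :: "'a set \<Rightarrow> 'a tree \<Rightarrow> bool" where
  "is_top S Leaf = False"
| "is_top S (Node l a r) =
     (\<exists>Sl Sr. S = insert a (Sl \<union> Sr) \<and> (Sl = {} \<or> is_top Sl l) \<and> (Sr = {} \<or> is_top Sr r))"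

fun hang :: "'a set \<Rightarrow> 'a tree \<Rightarrow> 'a tree list" where
  "hang S Leaf = []"
| "hang S (Node l a r) = (if a \<in> S then hang S l @ hang S r else [Node l a r])"

(* block boundaries of the sequence xs, where P tells to which side (input/output)
   an element belongs: first and last elements of maximal runs with constant P *)
definition block_boundaries :: "'a list \<Rightarrow> ('a \<Rightarrow> bool) \<Rightarrow> 'a set" where
  "block_boundaries xs P =
     {xs ! i | i. i < length xs \<and>
        (i = 0 \<or> P (xs ! (i - 1)) \<noteq> P (xs ! i) \<or>
         i + 1 = length xs \<or> P (xs ! (i + 1)) \<noteq> P (xs ! i))}"

definition bst_merge :: "'a::linorder tree \<Rightarrow> 'a tree \<Rightarrow> 'a tree \<Rightarrow> nat \<Rightarrow> bool" where
  "bst_merge TA TB T c \<longleftrightarrow>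
     bst TA \<and> bst TB \<and> set_tree TA \<inter> set_tree TB = {} \<and>
     bst T \<and> set_tree T = set_tree TA \<union> set_tree TB \<and>
     (\<exists>\<tau>a \<tau>b \<tau>. is_top \<tau>a TA \<and> is_top \<tau>b TB \<and> is_top \<tau> T \<and> \<tau> = \<tau>a \<union> \<tau>b \<and>
        (\<forall>s \<in> set (hang \<tau> T). s \<in> subtrees TA \<or> s \<in> subtrees TB) \<and>
        block_boundaries (sorted_list_of_set (set_tree T)) (\<lambda>k. k \<in> set_tree TA) \<subseteq> \<tau> \<and>
        c = card \<tau>)"

(* bst_mergesort xs T c: some run of BST mergesort on input sequence xs
   returns T using c accesses in total *)
inductive bst_mergesort :: "'a::linorder list \<Rightarrow> 'a tree \<Rightarrow> nat \<Rightarrow> bool" where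
  single: "bst_mergesort [x] (Node Leaf x Leaf) 0"
| split: "\<lbrakk> xs \<noteq> []; ys \<noteq> []; bst_mergesort xs TA ca; bst_mergesort ys TB cb;
           bst_merge TA TB T c \<rbrakk> \<Longrightarrow> bst_mergesort (xs @ ys) T (ca + cb + c)"

definition bt_partition :: "'a tree \<Rightarrow> 'a tree \<Rightarrow> 'a tree \<Rightarrow> nat \<Rightarrow> bool" where
  "bt_partition T TA TB c \<longleftrightarrow>
     distinct (inorder T) \<and> TA \<noteq> Leaf \<and> TB \<noteq> Leaf \<and>
     distinct (inorder TA) \<and> distinct (inorder TB) \<and>
     set_tree TA \<inter> set_tree TB = {} \<and> set_tree TA \<union> set_tree TB = set_tree T \<and>
     (\<exists>\<tau> \<tau>a \<tau>b. is_top \<tau> T \<and> is_top \<tau>a TA \<and> is_top \<tau>b TB \<and> \<tau> = \<tau>a \<union> \<tau>b \<and>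
        (\<forall>s \<in> set (hang \<tau> T). s \<in> subtrees TA \<or> s \<in> subtrees TB) \<and>
        block_boundaries (inorder T) (\<lambda>k. k \<in> set_tree TA) \<subseteq> \<tau> \<and>
        subseq (inorder TA) (inorder T) \<and> subseq (inorder TB) (inorder T) \<and>
        c = card \<tau>)"

(* bt_partition_sort T c: some run of BT partition sort started on T uses c accesses *)
inductive bt_partition_sort :: "'a::linorder tree \<Rightarrow> nat \<Rightarrow> bool" where
  single: "bt_partition_sort (Node Leaf x Leaf) 0"
| part: "\<lbrakk> bt_partition T Ta Tb c;
          \<forall>x \<in> set_tree Ta. x < k; \<forall>x \<in> set_tree Tb. k \<le> x;
          bt_partition_sort Ta ca; bt_partition_sort Tb cb \<rbrakk>
         \<Longrightarrow> bt_partition_sort T (c + ca + cb)"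

(* inverse of a permutation pi of {0..<n}, given as the list [pi(0),...,pi(n-1)] *)
definition perm_inv :: "nat list \<Rightarrow> nat list" where
  "perm_inv pi = map (\<lambda>k. THE i. i < length pi \<and> pi ! i = k) [0..<length pi]"

end

theory Submission
  imports Defs
begin

lemma sl_of_sorted: "sorted_wrt (<) (xs::'a::linorder list) \<Longrightarrow> sorted_list_of_set (set xs) = xs"
  by (rule sorted_distinct_set_unique) (auto simp: strict_sorted_iff)

lemma sl_append:
  fixes A B :: "'a::linorder set"
  assumes "finite A" "finite B" "\<forall>a\<in>A. \<forall>b\<in>B. a < b"
  shows "sorted_list_of_set (A \<union> B) = sorted_list_of_set A @ sorted_list_of_set B"
proof (rule sorted_distinct_set_unique)
  show "sorted (sorted_list_of_set A @ sorted_list_of_set B)"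
    using assms by (auto simp: sorted_append less_imp_le)
  show "distinct (sorted_list_of_set A @ sorted_list_of_set B)"
    using assms by fastforce
qed (use assms in auto)

lemma is_top_map: "is_top S t \<Longrightarrow> is_top (g ` S) (map_tree g t)"
proof (induction t arbitrary: S)
  case Leaf then show ?case by simp
next
  case (Node l a r)
  then obtain Sl Sr where h: "S = insert a (Sl \<union> Sr)" "Sl = {} \<or> is_top Sl l" "Sr = {} \<or> is_top Sr r"
    by auto
  show ?case
    apply simp
    apply (rule exI[of _ "g ` Sl"], rule exI[of _ "g ` Sr"])
    using h Node.IH by auto
qed

lemma is_top_sub: "is_top S t \<Longrightarrow> S \<subseteq> set_tree t"
  by (induction t arbitrary: S) fastforce+

lemma hang_map: "inj_on g (set_tree t \<union> S) \<Longrightarrow>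
  hang (g ` S) (map_tree g t) = map (map_tree g) (hang S t)"
proof (induction t)
  case Leaf then show ?case by simp
next
  case (Node l a r)
  have "(g a \<in> g ` S) = (a \<in> S)" using Node.prems by (auto dest: inj_onD)
  moreover have "inj_on g (set_tree l \<union> S)" "inj_on g (set_tree r \<union> S)"
    using Node.prems by (auto intro: inj_on_subset)
  ultimately show ?case using Node.IH by simp
qed

lemma subtrees_map: "s \<in> subtrees t \<Longrightarrow> map_tree g s \<in> subtrees (map_tree g t)"
  by (induction t) auto

lemma bb_map:
  assumes "\<forall>x\<in>set xs. P' (g x) = P x"
  shows "block_boundaries (map g xs) P' = g ` block_boundaries xs P"
proof -
  have e: "\<And>i. i < length xs \<Longrightarrow> P' (g (xs ! i)) = P (xs ! i)" using assms by auto
  show ?thesis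
    unfolding block_boundaries_def
  proof -
    have c: "\<And>i. i < length xs \<Longrightarrow>
      ((i = 0 \<or> P' (map g xs ! (i - 1)) \<noteq> P' (map g xs ! i) \<or>
         i + 1 = length (map g xs) \<or> P' (map g xs ! (i + 1)) \<noteq> P' (map g xs ! i)) =
      (i = 0 \<or> P (xs ! (i - 1)) \<noteq> P (xs ! i) \<or>
         i + 1 = length xs \<or> P (xs ! (i + 1)) \<noteq> P (xs ! i)))"
    proof -
      fix i assume i: "i < length xs"
      show "?thesis i"
      proof (cases "i = 0 \<or> i + 1 = length xs")
        case True then show ?thesis by auto
      next
        case False
        then have "i - 1 < length xs" "i + 1 < length xs" using i by auto
        then show ?thesis using i e False by simp
      qed
    qed
    show "{map g xs ! i |i. i < length (map g xs) \<and>
        (i = 0 \<or> P' (map g xs ! (i - 1)) \<noteq> P' (map g xs ! i) \<or>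
         i + 1 = length (map g xs) \<or> P' (map g xs ! (i + 1)) \<noteq> P' (map g xs ! i))} =
    g ` {xs ! i |i. i < length xs \<and>
        (i = 0 \<or> P (xs ! (i - 1)) \<noteq> P (xs ! i) \<or>
         i + 1 = length xs \<or> P (xs ! (i + 1)) \<noteq> P (xs ! i))}"
    proof (rule set_eqI, rule iffI)
      fix y assume "y \<in> {map g xs ! i |i. i < length (map g xs) \<and>
        (i = 0 \<or> P' (map g xs ! (i - 1)) \<noteq> P' (map g xs ! i) \<or>
         i + 1 = length (map g xs) \<or> P' (map g xs ! (i + 1)) \<noteq> P' (map g xs ! i))}"
      then obtain i where i: "i < length xs" "y = map g xs ! i" and ci:
        "(i = 0 \<or> P' (map g xs ! (i - 1)) \<noteq> P' (map g xs ! i) \<or>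
         i + 1 = length (map g xs) \<or> P' (map g xs ! (i + 1)) \<noteq> P' (map g xs ! i))" by force
      from c[OF i(1)] ci i show "y \<in> g ` {xs ! i |i. i < length xs \<and>
        (i = 0 \<or> P (xs ! (i - 1)) \<noteq> P (xs ! i) \<or>
         i + 1 = length xs \<or> P (xs ! (i + 1)) \<noteq> P (xs ! i))}" by auto
    next
      fix y assume "y \<in> g ` {xs ! i |i. i < length xs \<and>
        (i = 0 \<or> P (xs ! (i - 1)) \<noteq> P (xs ! i) \<or>
         i + 1 = length xs \<or> P (xs ! (i + 1)) \<noteq> P (xs ! i))}"
      then obtain i where i: "i < length xs" "y = g (xs ! i)" and ci:
        "(i = 0 \<or> P (xs ! (i - 1)) \<noteq> P (xs ! i) \<or>
         i + 1 = length xs \<or> P (xs ! (i + 1)) \<noteq> P (xs ! i))" by blast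
      from c[OF i(1)] ci i show "y \<in> {map g xs ! i |i. i < length (map g xs) \<and>
        (i = 0 \<or> P' (map g xs ! (i - 1)) \<noteq> P' (map g xs ! i) \<or>
         i + 1 = length (map g xs) \<or> P' (map g xs ! (i + 1)) \<noteq> P' (map g xs ! i))}"
        by (intro CollectI exI[of _ i]) simp
    qed
  qed
qed


lemma subseq_sorted_wrt: "subseq xs ys \<Longrightarrow> sorted_wrt R ys \<Longrightarrow> sorted_wrt R xs"
proof (induction rule: list_emb.induct)
  case (list_emb_Cons2 x y xs ys)
  then show ?case using list_emb_set[OF list_emb_Cons2.hyps(2)] by auto
qed auto

lemma ms_props: "bst_mergesort xs T c \<Longrightarrow> set_tree T = set xs \<and> bst T \<and> xs \<noteq> []"
  by (induction rule: bst_mergesort.induct) (auto simp: bst_merge_def)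

lemma A_to_B:
  "bt_partition_sort T c \<Longrightarrow> sorted_wrt (<) (map g (inorder T)) \<Longrightarrow>
   bst_mergesort (map g (sorted_list_of_set (set_tree T))) (map_tree g T) c"
proof (induction arbitrary: g rule: bt_partition_sort.induct)
  case (single x)
  then show ?case using bst_mergesort.single by simp
next
  case (part T Ta Tb c k ca cb)
  from part.hyps(1) obtain \<tau> \<tau>a \<tau>b where P:
     "distinct (inorder T)" "Ta \<noteq> Leaf" "Tb \<noteq> Leaf"
     "set_tree Ta \<inter> set_tree Tb = {}" "set_tree Ta \<union> set_tree Tb = set_tree T"
     "is_top \<tau> T" "is_top \<tau>a Ta" "is_top \<tau>b Tb" "\<tau> = \<tau>a \<union> \<tau>b"
     "\<forall>s \<in> set (hang \<tau> T). s \<in> subtrees Ta \<or> s \<in> subtrees Tb"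
     "block_boundaries (inorder T) (\<lambda>k. k \<in> set_tree Ta) \<subseteq> \<tau>"
     "subseq (inorder Ta) (inorder T)" "subseq (inorder Tb) (inorder T)"
     "c = card \<tau>"
    unfolding bt_partition_def by blast
  have sT: "sorted_wrt (<) (map g (inorder T))" by fact
  have sA: "sorted_wrt (<) (map g (inorder Ta))"
    by (rule subseq_sorted_wrt[OF subseq_map[OF P(12)] sT])
  have sB: "sorted_wrt (<) (map g (inorder Tb))"
    by (rule subseq_sorted_wrt[OF subseq_map[OF P(13)] sT])
  have inj: "inj_on g (set_tree T)"
    using sT by (metis distinct_map set_inorder strict_sorted_iff)
  have tsub: "\<tau> \<subseteq> set_tree T" using is_top_sub[OF P(6)] .
  have sl: "sorted_list_of_set (set_tree T) =
      sorted_list_of_set (set_tree Ta) @ sorted_list_of_set (set_tree Tb)"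
  proof -
    have "sorted_list_of_set (set_tree Ta \<union> set_tree Tb) =
      sorted_list_of_set (set_tree Ta) @ sorted_list_of_set (set_tree Tb)"
      using part.hyps(2,3) by (intro sl_append) force+
    then show ?thesis using P(5) by simp
  qed
  have IHa: "bst_mergesort (map g (sorted_list_of_set (set_tree Ta))) (map_tree g Ta) ca"
    using part.IH(1) sA .
  have IHb: "bst_mergesort (map g (sorted_list_of_set (set_tree Tb))) (map_tree g Tb) cb"
    using part.IH(2) sB .
  have ne: "map g (sorted_list_of_set (set_tree Ta)) \<noteq> []"
    "map g (sorted_list_of_set (set_tree Tb)) \<noteq> []"
    using P(2,3) by (auto simp: neq_Leaf_iff)
  have io: "sorted_list_of_set (set_tree (map_tree g T)) = map g (inorder T)"
    using sl_of_sorted[OF sT] by (simp add: inorder_map[symmetric])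
  have merge: "bst_merge (map_tree g Ta) (map_tree g Tb) (map_tree g T) c"
    unfolding bst_merge_def
  proof (intro conjI exI)
    show "bst (map_tree g Ta)" "bst (map_tree g Tb)" "bst (map_tree g T)"
      using sA sB sT by (simp_all add: bst_iff_sorted_wrt_less inorder_map)
    show "set_tree (map_tree g Ta) \<inter> set_tree (map_tree g Tb) = {}"
      using inj P(4,5) by (simp add: tree.set_map) (metis Un_upper1 Un_upper2 image_empty inj_on_image_Int)
    show "set_tree (map_tree g T) = set_tree (map_tree g Ta) \<union> set_tree (map_tree g Tb)"
      using P(5) by (auto simp: tree.set_map)
    show "is_top (g ` \<tau>a) (map_tree g Ta)" "is_top (g ` \<tau>b) (map_tree g Tb)"
       "is_top (g ` \<tau>) (map_tree g T)"
      using P(6-8) by (simp_all add: is_top_map)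
    show "g ` \<tau> = g ` \<tau>a \<union> g ` \<tau>b" using P(9) by auto
    have h: "hang (g ` \<tau>) (map_tree g T) = map (map_tree g) (hang \<tau> T)"
      using inj tsub by (intro hang_map) (simp add: Un_absorb2)
    show "\<forall>s\<in>set (hang (g ` \<tau>) (map_tree g T)).
       s \<in> subtrees (map_tree g Ta) \<or> s \<in> subtrees (map_tree g Tb)"
      using P(10) unfolding h by (auto intro: subtrees_map)
    have "block_boundaries (map g (inorder T)) (\<lambda>k. k \<in> set_tree (map_tree g Ta))
        = g ` block_boundaries (inorder T) (\<lambda>k. k \<in> set_tree Ta)"
    proof (rule bb_map, rule ballI)
      fix x assume "x \<in> set (inorder T)"
      then show "(g x \<in> set_tree (map_tree g Ta)) = (x \<in> set_tree Ta)"
        using inj P(5) by (simp add: tree.set_map) (metis Un_upper1 inj_on_image_mem_iff)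
    qed
    then show "block_boundaries (sorted_list_of_set (set_tree (map_tree g T)))
       (\<lambda>k. k \<in> set_tree (map_tree g Ta)) \<subseteq> g ` \<tau>"
      using io P(11) by auto
    show "c = card (g ` \<tau>)" using P(14) card_image[OF inj_on_subset[OF inj tsub]] by simp
  qed
  show ?case
    using bst_mergesort.split[OF ne IHa IHb merge] sl by (simp add: add.commute add.left_commute)
qed


lemma B_to_A:
  "bst_mergesort xs T c \<Longrightarrow> sorted_wrt (<) (map h xs) \<Longrightarrow>
   bt_partition_sort (map_tree h T) c"
proof (induction arbitrary: h rule: bst_mergesort.induct)
  case (single x)
  then show ?case using bt_partition_sort.single by simp
next
  case (split xs ys TA ca TB cb T c)
  from split.hyps(5) obtain \<tau>a \<tau>b \<tau> where M:
     "bst TA" "bst TB" "set_tree TA \<inter> set_tree TB = {}"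
     "bst T" "set_tree T = set_tree TA \<union> set_tree TB"
     "is_top \<tau>a TA" "is_top \<tau>b TB" "is_top \<tau> T" "\<tau> = \<tau>a \<union> \<tau>b"
     "\<forall>s \<in> set (hang \<tau> T). s \<in> subtrees TA \<or> s \<in> subtrees TB"
     "block_boundaries (sorted_list_of_set (set_tree T)) (\<lambda>k. k \<in> set_tree TA) \<subseteq> \<tau>"
     "c = card \<tau>"
    unfolding bst_merge_def by blast
  have sXY: "sorted_wrt (<) (map h (xs @ ys))" by fact
  then have sX: "sorted_wrt (<) (map h xs)" and sY: "sorted_wrt (<) (map h ys)"
    and lt: "\<And>a b. a \<in> set xs \<Longrightarrow> b \<in> set ys \<Longrightarrow> h a < h b"
    by (auto simp: sorted_wrt_append)
  have SA: "set_tree TA = set xs" and SB: "set_tree TB = set ys"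
    using ms_props[OF split.hyps(3)] ms_props[OF split.hyps(4)] by auto
  have ST: "set_tree T = set xs \<union> set ys" using M(5) SA SB by simp
  have inj: "inj_on h (set_tree T)"
    using sXY ST by (metis distinct_map set_append strict_sorted_iff)
  have tsub: "\<tau> \<subseteq> set_tree T" using is_top_sub[OF M(8)] .
  have iT: "sorted_wrt (<) (inorder T)" "sorted_wrt (<) (inorder TA)" "sorted_wrt (<) (inorder TB)"
    using M(1,2,4) by (simp_all add: bst_iff_sorted_wrt_less)
  have subs: "subseq (inorder TA) (inorder T)" if "sorted_wrt (<) (inorder TA)"
     "set_tree TA \<subseteq> set_tree T" for TA
  proof -
    have "inorder TA = filter (\<lambda>x. x \<in> set_tree TA) (inorder T)"
      apply (rule sorted_distinct_set_unique)
      using that iT(1) by (auto simp: strict_sorted_iff sorted_wrt_filter)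
    then show ?thesis by (metis subseq_filter_left)
  qed
  obtain y ys' where ys: "ys = y # ys'" using split.hyps(2) by (cases ys) auto
  have part: "bt_partition (map_tree h T) (map_tree h TA) (map_tree h TB) c"
    unfolding bt_partition_def
  proof (intro conjI exI)
    show "distinct (inorder (map_tree h T))"
      using inj iT(1) by (simp add: inorder_map distinct_map strict_sorted_iff)
    show "distinct (inorder (map_tree h TA))"
      using inj iT(2) ST SA by (simp add: inorder_map distinct_map strict_sorted_iff)
         (metis Un_upper1 inj_on_subset)
    show "distinct (inorder (map_tree h TB))"
      using inj iT(3) ST SB by (simp add: inorder_map distinct_map strict_sorted_iff)
         (metis Un_upper2 inj_on_subset)
    show "map_tree h TA \<noteq> Leaf" "map_tree h TB \<noteq> Leaf"
      using SA SB split.hyps(1,2) by auto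
    show "set_tree (map_tree h TA) \<inter> set_tree (map_tree h TB) = {}"
      using SA SB lt by (auto simp: tree.set_map) (metis less_irrefl)
    show "set_tree (map_tree h TA) \<union> set_tree (map_tree h TB) = set_tree (map_tree h T)"
      using M(5) by (auto simp: tree.set_map)
    show "is_top (h ` \<tau>a) (map_tree h TA)" "is_top (h ` \<tau>b) (map_tree h TB)"
       "is_top (h ` \<tau>) (map_tree h T)"
      using M(6-8) by (simp_all add: is_top_map)
    show "h ` \<tau> = h ` \<tau>a \<union> h ` \<tau>b" using M(9) by auto
    have hh: "hang (h ` \<tau>) (map_tree h T) = map (map_tree h) (hang \<tau> T)"
      using inj tsub by (intro hang_map) (simp add: Un_absorb2)
    show "\<forall>s\<in>set (hang (h ` \<tau>) (map_tree h T)).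
       s \<in> subtrees (map_tree h TA) \<or> s \<in> subtrees (map_tree h TB)"
      using M(10) unfolding hh by (auto intro: subtrees_map)
    have "block_boundaries (map h (inorder T)) (\<lambda>k. k \<in> set_tree (map_tree h TA))
        = h ` block_boundaries (inorder T) (\<lambda>k. k \<in> set_tree TA)"
    proof (rule bb_map, rule ballI)
      fix x assume "x \<in> set (inorder T)"
      then show "(h x \<in> set_tree (map_tree h TA)) = (x \<in> set_tree TA)"
        using inj_on_image_mem_iff[OF inj, of x "set_tree TA"] M(5) by (simp add: tree.set_map)
    qed
    then show "block_boundaries (inorder (map_tree h T))
       (\<lambda>k. k \<in> set_tree (map_tree h TA)) \<subseteq> h ` \<tau>"
      using M(11) sl_of_sorted[OF iT(1)] by (auto simp: inorder_map)
    show "subseq (inorder (map_tree h TA)) (inorder (map_tree h T))"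
      using subs[OF iT(2)] M(5) by (simp add: inorder_map subseq_map)
    show "subseq (inorder (map_tree h TB)) (inorder (map_tree h T))"
      using subs[OF iT(3)] M(5) by (simp add: inorder_map subseq_map)
    show "c = card (h ` \<tau>)" using M(12) card_image[OF inj_on_subset[OF inj tsub]] by simp
  qed
  have k1: "\<forall>x \<in> set_tree (map_tree h TA). x < h y"
    using SA lt ys by (auto simp: tree.set_map)
  have k2: "\<forall>x \<in> set_tree (map_tree h TB). h y \<le> x"
    using SB sY ys by (auto simp: tree.set_map less_imp_le)
  have IHa: "bt_partition_sort (map_tree h TA) ca" using split.IH(1) sX .
  have IHb: "bt_partition_sort (map_tree h TB) cb" using split.IH(2) sY .
  show ?case
    using bt_partition_sort.part[OF part k1 k2 IHa IHb]
    by (simp add: add.commute add.left_commute)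
qed

theorem lemma2:
  fixes pi :: "nat list" and c :: nat
  assumes "distinct pi" and "set pi = {0..<length pi}"
  shows "((\<exists>T. inorder T = pi \<and> bt_partition_sort T c) \<longrightarrow>
            (\<exists>T'. bst_mergesort (perm_inv pi) T' c))
       \<and> ((\<exists>T'. bst_mergesort (perm_inv pi) T' c) \<longrightarrow>
            (\<exists>T. inorder T = pi \<and> bt_partition_sort T c))"
proof -
  define n where "n = length pi"
  define g where "g = (\<lambda>k. THE i. i < length pi \<and> pi ! i = k)"
  have pinv: "perm_inv pi = map g [0..<n]" unfolding perm_inv_def g_def n_def by simp
  have gi: "g (pi ! i) = i" if "i < n" for i
    unfolding g_def
    apply (rule the_equality)
    using that assms(1) by (auto simp: n_def nth_eq_iff_index_eq)
  have gv: "g v < n \<and> pi ! g v = v" if "v < n" for v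
  proof -
    have "v \<in> set pi" using that assms(2) n_def by simp
    then obtain i where "i < n" "pi ! i = v" by (auto simp: in_set_conv_nth n_def)
    then show ?thesis using gi by auto
  qed
  have setpi: "set pi = {0..<n}" using assms(2) n_def by simp
  have mgpi: "map g pi = [0..<n]"
    by (rule nth_equalityI) (auto simp: n_def gi)
  have setinv: "set (perm_inv pi) = {0..<n}"
  proof
    show "set (perm_inv pi) \<subseteq> {0..<n}" using gv by (auto simp: pinv)
    show "{0..<n} \<subseteq> set (perm_inv pi)"
    proof
      fix i assume i: "i \<in> {0..<n}"
      then have "pi ! i \<in> {0..<n}" using setpi n_def by (metis atLeastLessThan_iff nth_mem)
      then show "i \<in> set (perm_inv pi)" using gi i by (force simp: pinv)
    qed
  qed
  have mhinv: "map ((!) pi) (perm_inv pi) = [0..<n]"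
    by (rule nth_equalityI) (auto simp: pinv gv)
  show ?thesis
  proof (intro conjI impI)
    assume "\<exists>T. inorder T = pi \<and> bt_partition_sort T c"
    then obtain T where T: "inorder T = pi" "bt_partition_sort T c" by blast
    have "sorted_wrt (<) (map g (inorder T))" using T mgpi by (simp add: sorted_wrt_upt)
    from A_to_B[OF T(2) this] have "bst_mergesort (map g (sorted_list_of_set (set_tree T))) (map_tree g T) c" .
    moreover have "sorted_list_of_set (set_tree T) = [0..<n]"
      using T setpi by (metis set_inorder sorted_list_of_set_range)
    ultimately show "\<exists>T'. bst_mergesort (perm_inv pi) T' c" using pinv by auto
  next
    assume "\<exists>T'. bst_mergesort (perm_inv pi) T' c"
    then obtain T' where T': "bst_mergesort (perm_inv pi) T' c" by blast
    have "sorted_wrt (<) (map ((!) pi) (perm_inv pi))" using mhinv by (simp add: sorted_wrt_upt)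
    from B_to_A[OF T' this] have "bt_partition_sort (map_tree ((!) pi) T') c" .
    moreover have "inorder T' = [0..<n]"
    proof -
      have "set_tree T' = {0..<n}" "bst T'" using ms_props[OF T'] setinv by auto
      then show ?thesis
        using sl_of_sorted[of "inorder T'"] by (simp add: bst_iff_sorted_wrt_less)
    qed
    then have "inorder (map_tree ((!) pi) T') = pi"
      by (simp add: inorder_map n_def map_nth)
    ultimately show "\<exists>T. inorder T = pi \<and> bt_partition_sort T c" by blast
  qed
qed

end
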